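(* In a PL+C model, suppose $\sum_{h\in\mathcal U}p_h\ge\alpha k$ for some $\alpha>1$. Let $i,j\in\mathcal U$ with $i\ne j$, and let $\Pr'_{PLC}$ denote PL+C probabilities when $p_j$ is replaced by some $p_j'\in(p_j,1]$ (all other parameters unchanged). Then $$\Pr'_{PLC}(\mathcal R_{i=1})\le\Pr_{PLC}(\mathcal R_{i=1})+\frac{(\alpha e^{1-\alpha})^k}{1-(\alpha e^{1-\alpha})^k}.$$ Moreover, if at least $k+1$ of the consideration probabilities equal $1$ after the replacement, then $\Pr'_{PLC}(\mathcal R_{i=1})\le\Pr_{PLC}(\mathcal R_{i=1})$.
   Context: PL+C model: universe $\mathcal U=\{1,\dots,n\}$, fixed ranking length $k\le n$. Each item $h$ has a utility $u_h\in\mathbb R$ and a consideration probability $p_h\in(0,1]$. A consideration set $C$ is drawn by including each item independently with probability $p_h$, conditioned on $|C|\ge k$: $\Pr_C(C)=\frac{1}{z_{k,p}}\prod_{h\in C}p_h\prod_{h\notin C}(1-p_h)$ for $|C|\ge k$ (with $z_{k,p}$ the normalizing constant), and $0$ otherwise. Given $C$, a length-$k$ ranking $r$ has probability $\Pr_{PL}(r\mid C)=\prod_{t=1}^k \frac{\exp(u_{r_t})}{\sum_{h\in C\setminus\{r_1,\dots,r_{t-1}\}}\exp(u_h)}$ if all $r_t\in C$, else $0$. $\Pr_{PLC}(r)=\sum_C\Pr_C(C)\Pr_{PL}(r\mid C)$, and for a set $R$ of rankings $\Pr_{PLC}(R)=\sum_{r\in R}\Pr_{PLC}(r)$. $\mathcal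 R_{i=1}$ is the set of length-$k$ rankings with $i$ in the first position. *)

theory Defs
  imports "HOL-Analysis.Analysis"
begin

definition universe :: "nat \<Rightarrow> nat set" where
  "universe n = {1..n}"

definition cs_weight :: "nat \<Rightarrow> (nat \<Rightarrow> real) \<Rightarrow> nat set \<Rightarrow> real" where
  "cs_weight n p C = (\<Prod>h\<in>C. p h) * (\<Prod>h\<in>universe n - C. 1 - p h)"

definition cs_norm :: "nat \<Rightarrow> nat \<Rightarrow> (nat \<Rightarrow> real) \<Rightarrow> real" where
  "cs_norm n k p = (\<Sum>C\<in>{C. C \<subseteq> universe n \<and> k \<le> card C}. cs_weight n p C)"

definition cs_prob :: "nat \<Rightarrow> nat \<Rightarrow> (nat \<Rightarrow> real) \<Rightarrow> nat set \<Rightarrow> real" where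
  "cs_prob n k p C = (if C \<subseteq> universe n \<and> k \<le> card C
      then cs_weight n p C / cs_norm n k p else 0)"

definition pl_prob :: "(nat \<Rightarrow> real) \<Rightarrow> nat set \<Rightarrow> nat list \<Rightarrow> real" where
  "pl_prob u C r = (if set r \<subseteq> C
      then (\<Prod>t<length r. exp (u (r ! t)) / (\<Sum>h\<in>C - set (take t r). exp (u h)))
      else 0)"

definition rankings :: "nat \<Rightarrow> nat \<Rightarrow> nat list set" where
  "rankings n k = {r. length r = k \<and> distinct r \<and> set r \<subseteq> universe n}"

definition rankings_first :: "nat \<Rightarrow> nat \<Rightarrow> nat \<Rightarrow> nat list set" where
  "rankings_first n k i = {r \<in> rankings n k. r ! 0 = i}"

definition plc_prob :: "nat \<Rightarrow> nat \<Rightarrow> (nat \<Rightarrow> real) \<Rightarrow> (nat \<Rightarrow> real) \<Rightarrow> nat list \<Rightarrow> real" where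
  "plc_prob n k u p r = (\<Sum>C\<in>Pow (universe n). cs_prob n k p C * pl_prob u C r)"

definition plc_prob_set :: "nat \<Rightarrow> nat \<Rightarrow> (nat \<Rightarrow> real) \<Rightarrow> (nat \<Rightarrow> real) \<Rightarrow> nat list set \<Rightarrow> real" where
  "plc_prob_set n k u p R = (\<Sum>r\<in>R. plc_prob n k u p r)"

end

theory Submission imports Defs begin


definition plp :: "(nat \<Rightarrow> real) \<Rightarrow> nat set \<Rightarrow> nat list \<Rightarrow> real" where
  "plp u C r = (\<Prod>t<length r. exp (u (r ! t)) / (\<Sum>h\<in>C - set (take t r). exp (u h)))"

definition dl :: "nat \<Rightarrow> nat set \<Rightarrow> nat list set" where
  "dl m C = {r. length r = m \<and> distinct r \<and> set r \<subseteq> C}"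

lemma plp_Cons: "plp u C (x # r) = exp (u x) / (\<Sum>h\<in>C. exp (u h)) * plp u (C - {x}) r"
  unfolding plp_def
  by (simp add: prod.lessThan_Suc_shift set_diff_eq Diff_insert2[symmetric] del: prod.lessThan_Suc)

lemma dl_finite: "finite C \<Longrightarrow> finite (dl m C)"
  unfolding dl_def
  by (rule finite_subset[OF _ finite_lists_length_eq[of C m]]) auto

lemma dl_Suc: "dl (Suc m) C = (\<lambda>(x,r). x # r) ` (SIGMA x:C. dl m (C - {x}))"
  unfolding dl_def
  by (auto simp: length_Suc_conv image_iff)

lemma plp_sum: "finite C \<Longrightarrow> m \<le> card C \<Longrightarrow> (\<Sum>r\<in>dl m C. plp u C r) = 1"
proof (induction m arbitrary: C)
  case 0
  have "dl 0 C = {[]}" by (auto simp: dl_def)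
  then show ?case by (simp add: plp_def)
next
  case (Suc m)
  have inj: "inj_on (\<lambda>(x,r). x # r) (SIGMA x:C. dl m (C - {x}))"
    by (auto simp: inj_on_def)
  have "(\<Sum>r\<in>dl (Suc m) C. plp u C r) = (\<Sum>(x,r)\<in>(SIGMA x:C. dl m (C - {x})). plp u C (x # r))"
    unfolding dl_Suc by (subst sum.reindex[OF inj]) (simp add: case_prod_unfold)
  also have "\<dots> = (\<Sum>x\<in>C. \<Sum>r\<in>dl m (C - {x}). plp u C (x # r))"
    using Suc.prems by (subst sum.Sigma) (auto simp: dl_finite)
  also have "\<dots> = (\<Sum>x\<in>C. exp (u x) / (\<Sum>h\<in>C. exp (u h)))"
  proof (rule sum.cong[OF refl])
    fix x assume x: "x \<in> C"
    have "(\<Sum>r\<in>dl m (C - {x}). plp u C (x # r)) = exp (u x) / (\<Sum>h\<in>C. exp (u h)) * (\<Sum>r\<in>dl m (C - {x}). plp u (C - {x}) r)"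
      by (simp add: plp_Cons sum_distrib_left)
    also have "(\<Sum>r\<in>dl m (C - {x}). plp u (C - {x}) r) = 1"
      using Suc.prems x by (intro Suc.IH) auto
    finally show "(\<Sum>r\<in>dl m (C - {x}). plp u C (x # r)) = exp (u x) / (\<Sum>h\<in>C. exp (u h))" by simp
  qed
  also have "\<dots> = 1"
  proof -
    have "C \<noteq> {}" using Suc.prems by auto
    then have "(\<Sum>h\<in>C. exp (u h)) > 0" using Suc.prems by (intro sum_pos) auto
    then show ?thesis by (simp add: sum_divide_distrib[symmetric])
  qed
  finally show ?case .
qed

lemma rf_sum:
  assumes "C \<subseteq> universe n" "k \<le> card C" "1 \<le> k"
  shows "(\<Sum>r\<in>rankings_first n k i. pl_prob u C r) =
     (if i \<in> C then exp (u i) / (\<Sum>h\<in>C. exp (u h)) else 0)"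
proof -
  have fin: "finite C" using assms(1) finite_subset unfolding universe_def by blast
  have finR: "finite (rankings_first n k i)"
    unfolding rankings_first_def rankings_def universe_def
    by (rule finite_subset[OF _ finite_lists_length_eq[of "{1..n}" k]]) auto
  have "(\<Sum>r\<in>rankings_first n k i. pl_prob u C r) = (\<Sum>r\<in>{r\<in>dl k C. r ! 0 = i}. plp u C r)"
  proof (rule sum.mono_neutral_cong_right[OF finR])
    show "{r \<in> dl k C. r ! 0 = i} \<subseteq> rankings_first n k i"
      using assms(1) by (auto simp: dl_def rankings_first_def rankings_def)
    show "\<forall>r\<in>rankings_first n k i - {r \<in> dl k C. r ! 0 = i}. pl_prob u C r = 0"
      by (auto simp: dl_def rankings_first_def rankings_def pl_prob_def)
    fix r assume "r \<in> {r \<in> dl k C. r ! 0 = i}"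
    then have "set r \<subseteq> C" by (simp add: dl_def)
    then show "pl_prob u C r = plp u C r" by (simp add: pl_prob_def plp_def)
  qed
  also have "\<dots> = (if i \<in> C then exp (u i) / (\<Sum>h\<in>C. exp (u h)) else 0)"
  proof (cases "i \<in> C")
    case False
    have E: "{r\<in>dl k C. r ! 0 = i} = {}"
    proof (rule equals0I)
      fix r assume r: "r \<in> {r\<in>dl k C. r ! 0 = i}"
      then have "0 < length r" "set r \<subseteq> C" "r ! 0 = i" using assms(3) by (auto simp: dl_def)
      then have "i \<in> C" using nth_mem[of 0 r] by auto
      then show False using False by simp
    qed
    show ?thesis by (simp only: E sum.empty False if_False)
  next
    case True
    obtain m where m: "k = Suc m" using assms(3) by (cases k) auto
    have eq: "{r\<in>dl k C. r ! 0 = i} = (\<lambda>r. i # r) ` dl m (C - {i})"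
      unfolding m dl_def using True by (auto simp: length_Suc_conv image_iff)
    have "(\<Sum>r\<in>{r\<in>dl k C. r ! 0 = i}. plp u C r) = (\<Sum>r\<in>dl m (C - {i}). plp u C (i # r))"
      unfolding eq by (subst sum.reindex) (auto simp: inj_on_def)
    also have "\<dots> = exp (u i) / (\<Sum>h\<in>C. exp (u h)) * (\<Sum>r\<in>dl m (C - {i}). plp u (C - {i}) r)"
      by (simp add: plp_Cons sum_distrib_left)
    also have "(\<Sum>r\<in>dl m (C - {i}). plp u (C - {i}) r) = 1"
      using fin True assms(2) m by (intro plp_sum) auto
    finally show ?thesis using True by simp
  qed
  finally show ?thesis .
qed


definition wt :: "nat set \<Rightarrow> (nat \<Rightarrow> real) \<Rightarrow> nat set \<Rightarrow> real" where
  "wt A p C = (\<Prod>h\<in>C. p h) * (\<Prod>h\<in>A - C. 1 - p h)"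

definition EW :: "nat set \<Rightarrow> (nat \<Rightarrow> real) \<Rightarrow> (nat set \<Rightarrow> real) \<Rightarrow> real" where
  "EW A p F = (\<Sum>C\<in>Pow A. wt A p C * F C)"

lemma wt_nonneg: "\<forall>h\<in>A. 0 \<le> p h \<and> p h \<le> 1 \<Longrightarrow> C \<subseteq> A \<Longrightarrow> 0 \<le> wt A p C"
  unfolding wt_def by (intro mult_nonneg_nonneg prod_nonneg) auto

lemma wt_total: "finite A \<Longrightarrow> EW A p (\<lambda>_. 1) = 1"
  unfolding EW_def wt_def using prod_add[of A p "\<lambda>h. 1 - p h"] by simp

lemma wt_pgf: "finite A \<Longrightarrow> EW A p (\<lambda>C. t ^ card C) = (\<Prod>h\<in>A. p h * t + (1 - p h))"
proof -
  assume fin: "finite A"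
  have "(\<Prod>h\<in>A. p h * t + (1 - p h)) = (\<Sum>C\<in>Pow A. (\<Prod>h\<in>C. p h * t) * (\<Prod>h\<in>A - C. 1 - p h))"
    by (rule prod_add[OF fin])
  also have "\<dots> = EW A p (\<lambda>C. t ^ card C)"
    unfolding EW_def wt_def
    by (rule sum.cong[OF refl]) (simp add: prod.distrib)
  finally show ?thesis by simp
qed

lemma EW_linear: "EW A p (\<lambda>C. F C + G C) = EW A p F + EW A p G"
  unfolding EW_def by (simp add: distrib_left sum.distrib)

lemma EW_diff: "EW A p (\<lambda>C. F C - G C) = EW A p F - EW A p G"
  unfolding EW_def by (simp add: right_diff_distrib sum_subtractf)

lemma EW_mono: "\<forall>h\<in>A. 0 \<le> p h \<and> p h \<le> 1 \<Longrightarrow> (\<And>C. C \<subseteq> A \<Longrightarrow> F C \<le> G C) \<Longrightarrow> EW A p F \<le> EW A p G"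
  unfolding EW_def by (intro sum_mono mult_left_mono) (auto intro: wt_nonneg)

lemma split_j:
  assumes "finite A" "j \<notin> A"
  shows "EW (insert j A) p F = (\<Sum>D\<in>Pow A. wt A p D * (p j * F (insert j D) + (1 - p j) * F D))"
proof -
  have inj: "inj_on (insert j) (Pow A)" using assms(2) by (auto simp: inj_on_def)
  have disj: "Pow A \<inter> insert j ` Pow A = {}" using assms(2) by auto
  have w1: "wt (insert j A) p D = (1 - p j) * wt A p D" if "D \<subseteq> A" for D
  proof -
    have "insert j A - D = insert j (A - D)" using that assms(2) by auto
    then show ?thesis unfolding wt_def using assms that by (simp add: finite_subset)
  qed
  have w2: "wt (insert j A) p (insert j D) = p j * wt A p D" if "D \<subseteq> A" for D
  proof -
    have "insert j A - insert j D = A - D" using that assms(2) by auto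
    moreover have "j \<notin> D" using that assms(2) by auto
    ultimately show ?thesis unfolding wt_def using assms that by (simp add: finite_subset)
  qed
  have "EW (insert j A) p F = (\<Sum>D\<in>Pow A. wt (insert j A) p D * F D) + (\<Sum>D\<in>insert j ` Pow A. wt (insert j A) p D * F D)"
    unfolding EW_def Pow_insert using assms(1) disj by (subst sum.union_disjoint) auto
  also have "(\<Sum>D\<in>insert j ` Pow A. wt (insert j A) p D * F D) = (\<Sum>D\<in>Pow A. wt (insert j A) p (insert j D) * F (insert j D))"
    by (subst sum.reindex[OF inj]) simp
  finally have "EW (insert j A) p F = (\<Sum>D\<in>Pow A. wt (insert j A) p D * F D + wt (insert j A) p (insert j D) * F (insert j D))"
    by (simp add: sum.distrib)
  also have "\<dots> = (\<Sum>D\<in>Pow A. wt A p D * (p j * F (insert j D) + (1 - p j) * F D))"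
    by (rule sum.cong[OF refl]) (simp add: w1 w2 algebra_simps)
  finally show ?thesis .
qed

lemma wt_upd: "j \<notin> A \<Longrightarrow> D \<subseteq> A \<Longrightarrow> wt A (p(j := x)) D = wt A p D"
  unfolding wt_def
  by (intro arg_cong2[where f="(*)"] prod.cong) auto

lemma mono_j:
  assumes "finite A" "j \<notin> A" "\<forall>h\<in>A. 0 \<le> p h \<and> p h \<le> 1" "a \<le> b"
    and "\<And>D. D \<subseteq> A \<Longrightarrow> F (insert j D) \<le> F D"
  shows "EW (insert j A) (p(j := b)) F \<le> EW (insert j A) (p(j := a)) F"
proof -
  have "EW (insert j A) (p(j := b)) F = (\<Sum>D\<in>Pow A. wt A p D * (b * F (insert j D) + (1 - b) * F D))"
    using split_j[OF assms(1,2)] assms(2) by (simp add: wt_upd)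
  also have "\<dots> \<le> (\<Sum>D\<in>Pow A. wt A p D * (a * F (insert j D) + (1 - a) * F D))"
  proof (rule sum_mono)
    fix D assume D: "D \<in> Pow A"
    have "b * (F (insert j D) - F D) \<le> a * (F (insert j D) - F D)"
      using assms(4) assms(5)[of D] D by (intro mult_right_mono_neg) auto
    then have "b * F (insert j D) + (1 - b) * F D \<le> a * F (insert j D) + (1 - a) * F D"
      by (simp add: algebra_simps)
    then show "wt A p D * (b * F (insert j D) + (1 - b) * F D) \<le> wt A p D * (a * F (insert j D) + (1 - a) * F D)"
      using wt_nonneg[OF assms(3)] D by (intro mult_left_mono) auto
  qed
  also have "\<dots> = EW (insert j A) (p(j := a)) F"
    using split_j[OF assms(1,2)] assms(2) by (simp add: wt_upd)
  finally show ?thesis .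
qed

lemma chernoff:
  fixes \<alpha> :: real and k :: nat
  assumes "finite A" "\<forall>h\<in>A. 0 \<le> p h \<and> p h \<le> 1" "\<alpha> > 1" "(\<Sum>h\<in>A. p h) \<ge> \<alpha> * real k"
  shows "EW A p (\<lambda>C. if card C < k then 1 else 0) \<le> (\<alpha> * exp (1 - \<alpha>)) ^ k"
proof -
  define t where "t = 1 / \<alpha>"
  have t: "0 < t" "t < 1" using assms(3) by (auto simp: t_def)
  have "EW A p (\<lambda>C. if card C < k then 1 else 0) \<le> EW A p (\<lambda>C. \<alpha> ^ k * t ^ card C)"
  proof (rule EW_mono[OF assms(2)])
    fix C :: "nat set"
    show "(if card C < k then 1 else 0) \<le> \<alpha> ^ k * t ^ card C"
    proof (cases "card C < k")
      case True
      have "\<alpha> ^ card C \<le> \<alpha> ^ k" using True assms(3) by (intro power_increasing) auto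
      then show ?thesis using True assms(3) by (simp add: t_def power_divide)
    next
      case False then show ?thesis using t assms(3) by simp
    qed
  qed
  also have "\<dots> = \<alpha> ^ k * EW A p (\<lambda>C. t ^ card C)"
    unfolding EW_def by (simp add: sum_distrib_left mult.assoc mult.left_commute)
  also have "\<dots> = \<alpha> ^ k * (\<Prod>h\<in>A. p h * t + (1 - p h))"
    using wt_pgf[OF assms(1), of p t] by simp
  also have "\<dots> \<le> \<alpha> ^ k * (\<Prod>h\<in>A. exp (p h * (t - 1)))"
  proof (intro mult_left_mono prod_mono)
    fix h assume "h \<in> A"
    then have "0 \<le> p h" "p h \<le> 1" using assms(2) by auto
    moreover have "0 \<le> p h * t" using \<open>0 \<le> p h\<close> t by simp
    moreover have "1 + p h * (t - 1) \<le> exp (p h * (t - 1))" by (rule exp_ge_add_one_self)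
    ultimately show "0 \<le> p h * t + (1 - p h) \<and> p h * t + (1 - p h) \<le> exp (p h * (t - 1))"
      by (simp add: algebra_simps)
  qed (use assms(3) in auto)
  also have "\<dots> = \<alpha> ^ k * exp ((t - 1) * (\<Sum>h\<in>A. p h))"
    by (simp add: exp_sum[OF assms(1), symmetric] sum_distrib_left mult.commute)
  also have "\<dots> \<le> \<alpha> ^ k * exp ((t - 1) * (\<alpha> * real k))"
    using assms(3,4) t by (intro mult_left_mono) (auto intro: mult_left_mono_neg)
  also have "(t - 1) * (\<alpha> * real k) = real k * (1 - \<alpha>)"
    using assms(3) by (simp add: t_def algebra_simps)
  also have "\<alpha> ^ k * exp (real k * (1 - \<alpha>)) = (\<alpha> * exp (1 - \<alpha>)) ^ k"
    by (simp add: exp_of_nat_mult power_mult_distrib)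
  finally show ?thesis .
qed

lemma delta_lt1:
  fixes \<alpha> :: real assumes "\<alpha> > 1" "1 \<le> k"
  shows "0 < \<alpha> * exp (1 - \<alpha>)" "\<alpha> * exp (1 - \<alpha>) < 1" "(\<alpha> * exp (1 - \<alpha>)) ^ k < 1"
proof -
  show p: "0 < \<alpha> * exp (1 - \<alpha>)" using assms by simp
  have "ln \<alpha> \<le> \<alpha> - 1" using assms by (intro ln_le_minus_one) auto
  moreover have "ln \<alpha> \<noteq> \<alpha> - 1" using ln_eq_minus_one[of \<alpha>] assms by auto
  ultimately have "ln \<alpha> + (1 - \<alpha>) < 0" by simp
  then have "exp (ln \<alpha> + (1 - \<alpha>)) < 1" by simp
  then show l: "\<alpha> * exp (1 - \<alpha>) < 1" using assms by (simp add: exp_add)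
  show "(\<alpha> * exp (1 - \<alpha>)) ^ k < 1" using p l assms(2) by (intro power_less_one_iff[THEN iffD2]) auto
qed


lemma EW_minus: "EW A p (\<lambda>C. - F C) = - EW A p F"
  unfolding EW_def by (simp add: sum_negf)

lemma norm_EW: "cs_norm n k q = EW (universe n) q (\<lambda>C. if k \<le> card C then 1 else 0)"
proof -
  have fin: "finite (Pow (universe n))" by (simp add: universe_def)
  have "{C. C \<subseteq> universe n \<and> k \<le> card C} = {C \<in> Pow (universe n). k \<le> card C}" by auto
  then show ?thesis
    unfolding cs_norm_def EW_def cs_weight_def wt_def
    by (simp only: sum.inter_filter[OF fin]) (rule sum.cong, auto)
qed

lemma prob_EW:
  assumes "1 \<le> k"
  shows "plc_prob_set n k u q (rankings_first n k i) =
    EW (universe n) q (\<lambda>C. (if k \<le> card C then 1 else 0) * (if i \<in> C then exp (u i) / (\<Sum>h\<in>C. exp (u h)) else 0))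
    / cs_norm n k q"
proof -
  have finR: "finite (rankings_first n k i)"
    unfolding rankings_first_def rankings_def universe_def
    by (rule finite_subset[OF _ finite_lists_length_eq[of "{1..n}" k]]) auto
  have finP: "finite (Pow (universe n))" by (simp add: universe_def)
  have "plc_prob_set n k u q (rankings_first n k i) =
      (\<Sum>C\<in>Pow (universe n). cs_prob n k q C * (\<Sum>r\<in>rankings_first n k i. pl_prob u C r))"
    unfolding plc_prob_set_def plc_prob_def
    by (subst sum.swap) (simp add: sum_distrib_left)
  also have "\<dots> = (\<Sum>C\<in>Pow (universe n). wt (universe n) q C * ((if k \<le> card C then 1 else 0) * (if i \<in> C then exp (u i) / (\<Sum>h\<in>C. exp (u h)) else 0)) / cs_norm n k q)"
  proof (rule sum.cong[OF refl])
    fix C assume C: "C \<in> Pow (universe n)"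
    show "cs_prob n k q C * (\<Sum>r\<in>rankings_first n k i. pl_prob u C r) =
      wt (universe n) q C * ((if k \<le> card C then 1 else 0) * (if i \<in> C then exp (u i) / (\<Sum>h\<in>C. exp (u h)) else 0)) / cs_norm n k q"
    proof (cases "k \<le> card C")
      case True
      then show ?thesis using C rf_sum[of C n k u i] assms
        by (simp add: cs_prob_def cs_weight_def wt_def)
    next
      case False
      then show ?thesis by (simp add: cs_prob_def)
    qed
  qed
  also have "\<dots> = EW (universe n) q (\<lambda>C. (if k \<le> card C then 1 else 0) * (if i \<in> C then exp (u i) / (\<Sum>h\<in>C. exp (u h)) else 0))
    / cs_norm n k q"
    unfolding EW_def by (simp add: sum_divide_distrib)
  finally show ?thesis .
qed

theorem lemma5:
  fixes n k :: nat and u p :: "nat \<Rightarrow> real" and \<alpha> pj' :: real and i j :: nat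
  assumes "1 \<le> k" and "k \<le> n"
    and "\<And>h. h \<in> universe n \<Longrightarrow> 0 < p h \<and> p h \<le> 1"
    and "\<alpha> > 1"
    and "(\<Sum>h\<in>universe n. p h) \<ge> \<alpha> * real k"
    and "i \<in> universe n" and "j \<in> universe n" and "i \<noteq> j"
    and "p j < pj'" and "pj' \<le> 1"
  shows "plc_prob_set n k u (p(j := pj')) (rankings_first n k i)
           \<le> plc_prob_set n k u p (rankings_first n k i)
              + (\<alpha> * exp (1 - \<alpha>)) ^ k / (1 - (\<alpha> * exp (1 - \<alpha>)) ^ k)
         \<and> (k + 1 \<le> card {h \<in> universe n. (p(j := pj')) h = 1} \<longrightarrow>
         plc_prob_set n k u (p(j := pj')) (rankings_first n k i)
           \<le> plc_prob_set n k u p (rankings_first n k i))"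
proof -
  define U where "U = universe n"
  define A where "A = U - {j}"
  define p' where "p' = p(j := pj')"
  define ind :: "nat set \<Rightarrow> real" where "ind = (\<lambda>C. if k \<le> card C then 1 else 0)"
  define hh where "hh = (\<lambda>C. if i \<in> C then exp (u i) / (\<Sum>h\<in>C. exp (u h)) else 0)"
  define G where "G = (\<lambda>C. ind C * hh C)"
  define z where "z = cs_norm n k p"
  define z' where "z' = cs_norm n k p'"
  define \<delta> where "\<delta> = (\<alpha> * exp (1 - \<alpha>)) ^ k"
  have finU: "finite U" by (simp add: U_def universe_def)
  have finA: "finite A" using finU by (simp add: A_def)
  have jA: "j \<notin> A" by (simp add: A_def)
  have UA: "U = insert j A" using assms(7) by (auto simp: A_def U_def)
  have pU: "\<forall>h\<in>U. 0 \<le> p h \<and> p h \<le> 1" using assms(3) by (force simp: U_def)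
  have pA: "\<forall>h\<in>A. 0 \<le> p h \<and> p h \<le> 1" using pU by (simp add: A_def)
  have p'U: "\<forall>h\<in>U. 0 \<le> p' h \<and> p' h \<le> 1" using pU assms(9,10) by (auto simp: p'_def)
  have pjp: "p(j := p j) = p" by simp
  have Pr: "plc_prob_set n k u p (rankings_first n k i) = EW U p G / z"
    using prob_EW[OF assms(1)] unfolding G_def ind_def hh_def z_def U_def by simp
  have Pr': "plc_prob_set n k u p' (rankings_first n k i) = EW U p' G / z'"
    using prob_EW[OF assms(1)] unfolding G_def ind_def hh_def z'_def U_def by simp
  have zE: "z = EW U p ind" unfolding z_def U_def ind_def by (rule norm_EW)
  have z'E: "z' = EW U p' ind" unfolding z'_def U_def ind_def by (rule norm_EW)
  have one_z: "1 - z = EW U p (\<lambda>C. if card C < k then 1 else 0)"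
  proof -
    have "EW U p (\<lambda>C. 1 - ind C) = 1 - z" using wt_total[OF finU, of p] zE by (simp add: EW_diff)
    moreover have "(\<lambda>C. 1 - ind C) = (\<lambda>C. if card C < k then 1 else 0)" by (auto simp: ind_def fun_eq_iff)
    ultimately show ?thesis by simp
  qed
  have dl: "0 < \<alpha> * exp (1 - \<alpha>)" "\<delta> < 1" using delta_lt1[OF assms(4,1)] by (auto simp: \<delta>_def)
  have zd: "1 - z \<le> \<delta>" unfolding one_z \<delta>_def
    using chernoff[OF finU pU assms(4)] assms(5) by (simp add: U_def)
  have zpos: "z > 0" using zd dl by simp
  have cins: "\<And>D. D \<subseteq> A \<Longrightarrow> card D \<le> card (insert j D)"
    by (meson card_insert_le finA finite_subset)
  have zz': "z \<le> z'"
  proof -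
    have "EW (insert j A) (p(j := pj')) (\<lambda>C. - ind C) \<le> EW (insert j A) (p(j := p j)) (\<lambda>C. - ind C)"
    proof (rule mono_j[OF finA jA pA])
      show "p j \<le> pj'" using assms(9) by simp
    next
      fix D assume D: "D \<subseteq> A"
      show "- ind (insert j D) \<le> - ind D"
        using cins[OF D] by (simp add: ind_def)
    qed
    then show ?thesis unfolding zE z'E UA p'_def pjp EW_minus by simp
  qed
  have hh0: "0 \<le> hh C" for C by (simp add: hh_def sum_nonneg)
  have hh1: "hh C \<le> 1" if "C \<subseteq> U" for C
  proof -
    have "finite C" using that finU finite_subset by blast
    then have "i \<in> C \<Longrightarrow> exp (u i) \<le> (\<Sum>h\<in>C. exp (u h))" by (intro member_le_sum) auto
    show ?thesis
    proof (cases "i \<in> C")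
      case True
      have le: "exp (u i) \<le> (\<Sum>h\<in>C. exp (u h))" using True by fact
      have "0 < exp (u i)" by simp
      then have "0 < (\<Sum>h\<in>C. exp (u h))" using le by linarith
      then show ?thesis using True le by (simp add: hh_def)
    qed (simp add: hh_def)
  qed
  have E0: "0 \<le> EW U p G"
    unfolding EW_def G_def ind_def
  proof (rule sum_nonneg)
    fix C assume "C \<in> Pow U"
    then have "0 \<le> wt U p C" using wt_nonneg[OF pU] by simp
    then show "0 \<le> wt U p C * ((if k \<le> card C then 1 else 0) * hh C)"
      using hh0[of C] by simp
  qed
  have step1: "EW U p' G \<le> EW U p' hh"
    by (rule EW_mono[OF p'U]) (simp add: G_def ind_def hh0)
  have step2: "EW U p' hh \<le> EW U p hh"
  proof -
    have "EW (insert j A) (p(j := pj')) hh \<le> EW (insert j A) (p(j := p j)) hh"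
    proof (rule mono_j[OF finA jA pA])
      show "p j \<le> pj'" using assms(9) by simp
    next
      fix D assume D: "D \<subseteq> A"
      have fD: "finite D" using D finA finite_subset by blast
      have jD: "j \<notin> D" using D jA by auto
      show "hh (insert j D) \<le> hh D"
      proof (cases "i \<in> D")
        case True
        have pos: "0 < (\<Sum>h\<in>D. exp (u h))" using True fD by (intro sum_pos) auto
        have "exp (u i) / (exp (u j) + (\<Sum>h\<in>D. exp (u h))) \<le> exp (u i) / (\<Sum>h\<in>D. exp (u h))"
        proof (rule divide_left_mono)
          have "0 < exp (u j) + (\<Sum>h\<in>D. exp (u h))" using pos exp_gt_zero[of "u j"] by linarith
          then show "0 < (exp (u j) + (\<Sum>h\<in>D. exp (u h))) * (\<Sum>h\<in>D. exp (u h))"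
            using pos by (rule mult_pos_pos)
        qed (use pos in auto)
        then show ?thesis using True fD jD by (simp add: hh_def)
      next
        case False
        then show ?thesis using assms(8) by (simp add: hh_def)
      qed
    qed
    then show ?thesis unfolding UA p'_def pjp .
  qed
  have step3: "EW U p hh \<le> EW U p G + (1 - z)"
  proof -
    have "EW U p hh = EW U p (\<lambda>C. G C + (1 - ind C) * hh C)"
      unfolding G_def by (simp add: algebra_simps)
    also have "\<dots> = EW U p G + EW U p (\<lambda>C. (1 - ind C) * hh C)" by (rule EW_linear)
    also have "EW U p (\<lambda>C. (1 - ind C) * hh C) \<le> EW U p (\<lambda>C. if card C < k then 1 else 0)"
    proof (rule EW_mono[OF pU])
      fix C :: "nat set" assume C: "C \<subseteq> U"
      show "(1 - ind C) * hh C \<le> (if card C < k then 1 else 0)"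
        using hh1[OF C] hh0[of C] by (cases "k \<le> card C") (simp_all add: ind_def)
    qed
    finally show ?thesis unfolding one_z by simp
  qed
  have main: "EW U p' G / z' \<le> EW U p G / z + (1 - z) / z"
  proof -
    have "EW U p' G / z' \<le> (EW U p G + (1 - z)) / z'"
      using step1 step2 step3 zpos zz' by (intro divide_right_mono) auto
    also have "\<dots> \<le> (EW U p G + (1 - z)) / z"
    proof (rule divide_left_mono)
      have "EW U p (\<lambda>C. 0) \<le> EW U p (\<lambda>C. if card C < k then 1 else 0)"
        by (rule EW_mono[OF pU]) simp
      then have "0 \<le> 1 - z" unfolding one_z by (simp add: EW_def)
      then show "0 \<le> EW U p G + (1 - z)" using E0 by linarith
      show "z \<le> z'" by (fact zz')
      show "0 < z' * z" using zpos zz' by simp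
    qed
    also have "\<dots> = EW U p G / z + (1 - z) / z" by (simp add: add_divide_distrib)
    finally show ?thesis .
  qed
  have part1: "(1 - z) / z \<le> \<delta> / (1 - \<delta>)"
  proof -
    have "(1 - z) / z = 1 / z - 1" using zpos by (simp add: field_simps)
    also have "\<dots> \<le> 1 / (1 - \<delta>) - 1" using zd dl zpos by (simp add: frac_le)
    also have "\<dots> = \<delta> / (1 - \<delta>)" using dl by (simp add: field_simps)
    finally show ?thesis .
  qed
  have part2: "z = 1" if card: "k + 1 \<le> card {h \<in> U. p' h = 1}"
  proof -
    define Os where "Os = {h \<in> U. p h = 1}"
    have "{h \<in> U. p' h = 1} - {j} \<subseteq> Os" by (auto simp: Os_def p'_def)
    then have "card ({h \<in> U. p' h = 1} - {j}) \<le> card Os" using finU by (intro card_mono) (auto simp: Os_def)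
    moreover have "card {h \<in> U. p' h = 1} - 1 \<le> card ({h \<in> U. p' h = 1} - {j})"
      by (simp add: card_Diff_singleton_if)
    ultimately have cO: "k \<le> card Os" using card by linarith
    have "EW U p (\<lambda>C. if card C < k then 1 else 0) = 0"
      unfolding EW_def
    proof (rule sum.neutral, rule ballI)
      fix C assume C: "C \<in> Pow U"
      show "wt U p C * (if card C < k then 1 else 0) = 0"
      proof (cases "card C < k")
        case True
        have "\<not> Os \<subseteq> C"
        proof
          assume "Os \<subseteq> C"
          then have "card Os \<le> card C" using C finU by (intro card_mono) (auto intro: finite_subset)
          then show False using True cO by simp
        qed
        then obtain h where h: "h \<in> Os" "h \<notin> C" by auto
        have "(\<Prod>h\<in>U - C. 1 - p h) = 0"
          using h finU by (intro prod_zero) (auto simp: Os_def)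
        then show ?thesis by (simp add: wt_def)
      qed simp
    qed
    then show ?thesis using one_z by simp
  qed
  have f1: "plc_prob_set n k u p' (rankings_first n k i) \<le> plc_prob_set n k u p (rankings_first n k i) + \<delta> / (1 - \<delta>)"
    unfolding Pr Pr' using main part1 by linarith
  have f2: "k + 1 \<le> card {h \<in> U. p' h = 1} \<longrightarrow> plc_prob_set n k u p' (rankings_first n k i) \<le> plc_prob_set n k u p (rankings_first n k i)"
  proof
    assume "k + 1 \<le> card {h \<in> U. p' h = 1}"
    then have "z = 1" by (rule part2)
    then show "plc_prob_set n k u p' (rankings_first n k i) \<le> plc_prob_set n k u p (rankings_first n k i)"
      unfolding Pr Pr' using main by simp
  qed
  from f1 f2 show ?thesis unfolding p'_def U_def \<delta>_def by (intro conjI)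
qed

end
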